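(* Let $n\ge2$, $1\le p<\infty$, and $h(x)=\mathrm{TV}_p(x)=\big(\sum_{i=2}^n|x_i-x_{i-1}|^p\big)^{1/p}$ on $\mathbb{R}^n$. Let $x_k\in\mathbb{R}^n$, $g\in\mathbb{R}^n$, $\nu_k>0$ and $\psi(s;x_k)=h(x_k+s)$. The problem $$\min_{s\in\mathbb{R}^n}\ g^Ts+\tfrac12\nu_k^{-1}\|s\|^2+\psi(s;x_k)$$ has a unique solution $s_{k,\mathrm{cp}}$, and $$\|s_{k,\mathrm{cp}}\|\le\begin{cases}\nu_k\Big(\|g\|+2\sin\big(\tfrac{\pi(n-1)}{2n}\big)\,n^{1/p-1/2}\Big)&\text{if }1\le p<2,\\ \nu_k\Big(\|g\|+2\sin\big(\tfrac{\pi(n-1)}{2n}\big)\Big)&\text{if }p\ge2.\end{cases}$$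
   Context: $\|\cdot\|$ is the Euclidean norm. *)

theory Defs
  imports "HOL-Analysis.Analysis"
begin

text \<open>Vectors of R^n are represented as functions nat => real with coordinates
  x 0, ..., x (n-1) (0-based) and all other coordinates equal to 0.\<close>

definition vecs :: "nat \<Rightarrow> (nat \<Rightarrow> real) set" where
  "vecs n = {x. \<forall>i\<ge>n. x i = 0}"

definition enorm :: "nat \<Rightarrow> (nat \<Rightarrow> real) \<Rightarrow> real" where
  "enorm n x = sqrt (\<Sum>i<n. (x i)\<^sup>2)"

definition dotp :: "nat \<Rightarrow> (nat \<Rightarrow> real) \<Rightarrow> (nat \<Rightarrow> real) \<Rightarrow> real" where
  "dotp n x y = (\<Sum>i<n. x i * y i)"

definition TVp :: "nat \<Rightarrow> real \<Rightarrow> (nat \<Rightarrow> real) \<Rightarrow> real" where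
  "TVp n p x = (\<Sum>i\<in>{1..<n}. \<bar>x i - x (i - 1)\<bar> powr p) powr (1 / p)"

definition cp_obj :: "nat \<Rightarrow> real \<Rightarrow> (nat \<Rightarrow> real) \<Rightarrow> (nat \<Rightarrow> real) \<Rightarrow> real
    \<Rightarrow> (nat \<Rightarrow> real) \<Rightarrow> real" where
  "cp_obj n p xk g \<nu> s = dotp n g s + (1/2) * inverse \<nu> * (enorm n s)\<^sup>2
      + TVp n p (\<lambda>i. xk i + s i)"

end

theory Submission
  imports Defs
begin

lemma powr_convex_pt:
  fixes x y u p :: real
  assumes "x \<ge> 0" "y \<ge> 0" "0 \<le> u" "u \<le> 1" "p \<ge> 1"
  shows "(u * x + (1 - u) * y) powr p \<le> u * x powr p + (1 - u) * y powr p"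
proof -
  have key: "(v * z) powr p \<le> v * z powr p" if "0 \<le> v" "v \<le> 1" "z \<ge> 0" for v z
  proof -
    have "v powr p \<le> v powr 1"
      using that assms(5) by (intro powr_mono') auto
    then have "v powr p \<le> v" using that by simp
    then show ?thesis using that by (simp add: powr_mult mult_right_mono)
  qed
  show ?thesis
  proof (cases "x = 0 \<or> y = 0 \<or> u = 0 \<or> u = 1")
    case True
    then show ?thesis using key[of u x] key[of "1-u" y] assms
      by auto
  next
    case False
    then have "x > 0" "y > 0" "0 < u" "u < 1" using assms by auto
    have "convex_on {0<..} (\<lambda>x. x powr p)" using powr_convex assms(5) .
    from convex_onD[OF this, of "1-u" x y] show ?thesis
      using \<open>x > 0\<close> \<open>y > 0\<close> assms by (simp add: algebra_simps)
  qed
qed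

lemma powr_convex0: "p \<ge> 1 \<Longrightarrow> convex_on {0..} (\<lambda>x::real. x powr p)"
proof (rule convex_onI)
  fix t x y :: real assume "1 \<le> p" "0 < t" "t < 1" "x \<in> {0..}" "y \<in> {0..}"
  then show "((1 - t) *\<^sub>R x + t *\<^sub>R y) powr p \<le> (1 - t) * x powr p + t * y powr p"
    using powr_convex_pt[of y x t p] by (simp add: algebra_simps)
qed auto

lemma powr_p_inv:
  fixes S p :: real assumes "S \<ge> 0" "p > 0"
  shows "(S powr (1/p)) powr p = S"
  using assms by (simp add: powr_powr)

lemma powr_inv_p:
  fixes S p :: real assumes "S \<ge> 0" "p > 0"
  shows "(S powr p) powr (1/p) = S"
  using assms by (simp add: powr_powr)

lemma minkowski:
  fixes a b :: "'i \<Rightarrow> real"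
  assumes I: "finite I" and p: "p \<ge> 1" and a: "\<And>i. i\<in>I \<Longrightarrow> a i \<ge> 0" and b: "\<And>i. i\<in>I \<Longrightarrow> b i \<ge> 0"
  shows "(\<Sum>i\<in>I. (a i + b i) powr p) powr (1/p)
     \<le> (\<Sum>i\<in>I. a i powr p) powr (1/p) + (\<Sum>i\<in>I. b i powr p) powr (1/p)"
proof -
  define SA where "SA = (\<Sum>i\<in>I. a i powr p)"
  define SB where "SB = (\<Sum>i\<in>I. b i powr p)"
  define A where "A = SA powr (1/p)"
  define B where "B = SB powr (1/p)"
  have SA0: "SA \<ge> 0" "SB \<ge> 0" unfolding SA_def SB_def by (auto intro: sum_nonneg)
  have AP: "A powr p = SA" "B powr p = SB" unfolding A_def B_def using SA0 p by (auto intro: powr_p_inv)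
  have A0: "A \<ge> 0" "B \<ge> 0" unfolding A_def B_def by auto
  show ?thesis
  proof (cases "A = 0 \<or> B = 0")
    case True
    then show ?thesis
    proof
      assume "A = 0"
      then have "SA = 0" using AP by simp
      then have "\<forall>i\<in>I. a i powr p = 0" unfolding SA_def using I by (subst (asm) sum_nonneg_eq_0_iff) auto
      then have "\<forall>i\<in>I. a i = 0" by simp
      then show ?thesis using \<open>A = 0\<close> unfolding A_def SA_def by simp
    next
      assume "B = 0"
      then have "SB = 0" using AP by simp
      then have "\<forall>i\<in>I. b i powr p = 0" unfolding SB_def using I by (subst (asm) sum_nonneg_eq_0_iff) auto
      then have "\<forall>i\<in>I. b i = 0" by simp
      then show ?thesis using \<open>B = 0\<close> unfolding B_def SB_def by simp
    qed
  next
    case False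
    then have Ap: "A > 0" "B > 0" using A0 by auto
    define l where "l = A / (A + B)"
    have l: "0 \<le> l" "l \<le> 1" "1 - l = B / (A + B)" using Ap unfolding l_def by (auto simp: field_simps)
    have pt: "(a i + b i) powr p \<le> (A + B) powr p * (l * (a i powr p / SA) + (1 - l) * (b i powr p / SB))"
      if i: "i \<in> I" for i
    proof -
      have e: "a i + b i = (A + B) * (l * (a i / A) + (1 - l) * (b i / B))"
      proof -
        have "A + B > 0" using Ap by simp
        have "l * (a i / A) + (1 - l) * (b i / B) = (a i + b i) / (A + B)"
        proof -
          have "l * (a i / A) = a i / (A + B)" unfolding l_def using Ap by simp
          moreover have "(1 - l) * (b i / B) = b i / (A + B)" unfolding l(3) using Ap by simp
          ultimately show ?thesis by (simp add: add_divide_distrib)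
        qed
        moreover have "(A + B) * ((a i + b i) / (A + B)) = a i + b i" using \<open>A + B > 0\<close> by simp
        ultimately show ?thesis by simp
      qed
      have "(a i + b i) powr p = (A + B) powr p * (l * (a i / A) + (1 - l) * (b i / B)) powr p"
        unfolding e using Ap a[OF i] b[OF i] l by (auto intro!: powr_mult)
      also have "\<dots> \<le> (A + B) powr p * (l * (a i / A) powr p + (1 - l) * (b i / B) powr p)"
        using Ap a[OF i] b[OF i] l p by (intro mult_left_mono powr_convex_pt) auto
      also have "(a i / A) powr p = a i powr p / SA" using Ap a[OF i] AP by (simp add: powr_divide)
      also have "(b i / B) powr p = b i powr p / SB" using Ap b[OF i] AP by (simp add: powr_divide)
      finally show ?thesis .
    qed
    have SAp: "SA > 0" "SB > 0" using AP Ap by auto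
    have "(\<Sum>i\<in>I. (a i + b i) powr p) \<le> (\<Sum>i\<in>I. (A + B) powr p * (l * (a i powr p / SA) + (1 - l) * (b i powr p / SB)))"
      using pt by (rule sum_mono)
    also have "\<dots> = (A + B) powr p * (l * ((\<Sum>i\<in>I. a i powr p) / SA) + (1 - l) * ((\<Sum>i\<in>I. b i powr p) / SB))"
      by (simp add: sum_distrib_left sum_distrib_right sum.distrib sum_divide_distrib algebra_simps)
    also have "\<dots> = (A + B) powr p" using SAp unfolding SA_def[symmetric] SB_def[symmetric] by simp
    finally have "(\<Sum>i\<in>I. (a i + b i) powr p) powr (1/p) \<le> ((A + B) powr p) powr (1/p)"
      using p a b by (intro powr_mono2) (auto intro!: sum_nonneg)
    also have "\<dots> = A + B" using Ap p by (intro powr_inv_p) auto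
    finally show ?thesis unfolding A_def B_def SA_def SB_def .
  qed
qed

lemma lp_le_l2:
  fixes y :: "'i \<Rightarrow> real"
  assumes I: "finite I" and p: "p \<ge> 2" and y: "\<And>i. i\<in>I \<Longrightarrow> y i \<ge> 0"
  shows "(\<Sum>i\<in>I. y i powr p) powr (1/p) \<le> sqrt (\<Sum>i\<in>I. (y i)\<^sup>2)"
proof -
  define S where "S = (\<Sum>i\<in>I. (y i)\<^sup>2)"
  have S0: "S \<ge> 0" unfolding S_def by (auto intro: sum_nonneg)
  show ?thesis
  proof (cases "S = 0")
    case True
    then have "\<forall>i\<in>I. (y i)\<^sup>2 = 0" unfolding S_def using I by (subst (asm) sum_nonneg_eq_0_iff) auto
    then show ?thesis unfolding S_def[symmetric] using True p by simp
  next
    case False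
    define r where "r = sqrt S"
    have r: "r > 0" "r\<^sup>2 = S" using S0 False unfolding r_def by auto
    have zle: "(y i / r) powr p \<le> (y i / r)\<^sup>2" if i: "i \<in> I" for i
    proof -
      have "(y i)\<^sup>2 \<le> S" unfolding S_def using I i by (intro member_le_sum) auto
      then have "y i \<le> r" unfolding r_def using y[OF i] by (simp add: real_le_rsqrt)
      then have "y i / r \<le> 1" using r by simp
      then have "(y i / r) powr p \<le> (y i / r) powr 2" using p y[OF i] r by (intro powr_mono') auto
      then show ?thesis using y[OF i] r by simp
    qed
    have "(\<Sum>i\<in>I. y i powr p) = (\<Sum>i\<in>I. r powr p * (y i / r) powr p)"
      using r y by (intro sum.cong) (auto simp: powr_divide)
    also have "\<dots> = r powr p * (\<Sum>i\<in>I. (y i / r) powr p)" by (simp add: sum_distrib_left)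
    also have "\<dots> \<le> r powr p * (\<Sum>i\<in>I. (y i / r)\<^sup>2)"
      by (intro mult_left_mono sum_mono zle) auto
    also have "(\<Sum>i\<in>I. (y i / r)\<^sup>2) = S / r\<^sup>2"
      unfolding S_def by (simp add: power_divide sum_divide_distrib)
    also have "\<dots> = 1" using r False by simp
    finally have "(\<Sum>i\<in>I. y i powr p) powr (1/p) \<le> (r powr p) powr (1/p)"
      using p y by (intro powr_mono2) (auto intro!: sum_nonneg)
    also have "\<dots> = r" using r p by (intro powr_inv_p) auto
    finally show ?thesis unfolding r_def S_def .
  qed
qed

lemma lp_le_l2_small:
  fixes y :: "'i \<Rightarrow> real"
  assumes I: "finite I" "I \<noteq> {}" and p: "1 \<le> p" "p < 2" and y: "\<And>i. i\<in>I \<Longrightarrow> y i \<ge> 0"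
  shows "(\<Sum>i\<in>I. y i powr p) powr (1/p) \<le> real (card I) powr (1/p - 1/2) * sqrt (\<Sum>i\<in>I. (y i)\<^sup>2)"
proof -
  define m where "m = real (card I)"
  have m: "m > 0" unfolding m_def using I by (simp add: card_gt_0_iff)
  define S where "S = (\<Sum>i\<in>I. (y i)\<^sup>2)"
  have S0: "S \<ge> 0" unfolding S_def by (auto intro: sum_nonneg)
  define q where "q = 2 / p"
  have q: "q \<ge> 1" using p unfolding q_def by simp
  define U where "U = (\<Sum>i\<in>I. y i powr p)"
  have U0: "U \<ge> 0" unfolding U_def by (auto intro: sum_nonneg)
  have "(\<Sum>i\<in>I. (1/m) *\<^sub>R (y i powr p)) powr q \<le> (\<Sum>i\<in>I. (1/m) * (y i powr p) powr q)"
    using I m by (intro convex_on_sum[OF _ _ powr_convex0[OF q]]) (auto simp: m_def)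
  also have "(\<Sum>i\<in>I. (1/m) * (y i powr p) powr q) = S / m"
  proof -
    have "(y i powr p) powr q = (y i)\<^sup>2" if "i \<in> I" for i
      using y[OF that] p unfolding q_def by (simp add: powr_powr)
    then show ?thesis unfolding S_def by (simp add: sum_distrib_left sum_divide_distrib)
  qed
  also have "(\<Sum>i\<in>I. (1/m) *\<^sub>R (y i powr p)) = U / m" unfolding U_def by (simp add: sum_divide_distrib)
  finally have "((U / m) powr q) powr (1/q) \<le> (S / m) powr (1/q)"
    using q m U0 by (intro powr_mono2) auto
  moreover have "((U / m) powr q) powr (1/q) = U / m" using q m U0 by (intro powr_inv_p) auto
  ultimately have "U / m \<le> (S / m) powr (p/2)" unfolding q_def by simp
  then have "U \<le> m * (S / m) powr (p/2)" using m by (simp add: field_simps)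
  then have "U powr (1/p) \<le> (m * (S / m) powr (p/2)) powr (1/p)"
    using U0 p by (intro powr_mono2) auto
  also have "\<dots> = m powr (1/p) * (S / m) powr (1/2)"
    using m S0 p by (simp add: powr_mult powr_powr)
  also have "\<dots> = m powr (1/p - 1/2) * sqrt S"
    using m S0 by (simp add: powr_divide powr_diff powr_half_sqrt real_sqrt_divide)
  finally show ?thesis unfolding U_def m_def S_def .
qed


lemma step_ineq:
  fixes a b u v :: real assumes "u > 0" "v > 0"
  shows "(b - a)\<^sup>2 \<le> (1 + v/u) * a\<^sup>2 + (1 + u/v) * b\<^sup>2"
proof -
  have e: "(v / u) * a\<^sup>2 + (u / v) * b\<^sup>2 + 2 * a * b = (v * a + u * b)\<^sup>2 / (u * v)"
    using assms by (simp add: field_simps power2_eq_square)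
  have "(v * a + u * b)\<^sup>2 / (u * v) \<ge> 0" using assms by simp
  then show ?thesis using e by (simp add: power2_eq_square algebra_simps)
qed

lemma diff_bound:
  fixes x :: "nat \<Rightarrow> real"
  assumes n: "n \<ge> 2"
  shows "(\<Sum>i\<in>{1..<n}. (x i - x (i-1))\<^sup>2) \<le> (2 + 2 * cos (pi / n)) * (\<Sum>i<n. (x i)\<^sup>2)"
proof -
  define th where "th = pi / (2 * n)"
  define w where "w t = sin ((2 * t + 1) * th)" for t :: real
  define c where "c = cos (pi / n)"
  define K where "K = 2 + 2 * c"
  define a where "a m = 1 + w (real m - 1) / w (real m)" for m :: nat
  have th2: "2 * th = pi / n" unfolding th_def by simp
  have nth: "2 * real n * th = pi" unfolding th_def using n by simp
  have th0: "th > 0" unfolding th_def using n by simp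
  have W1: "w (t - 1) + w (t + 1) = 2 * c * w t" for t
  proof -
    have "w (t - 1) = sin ((2 * t + 1) * th - 2 * th)" unfolding w_def by (simp add: algebra_simps)
    moreover have "w (t + 1) = sin ((2 * t + 1) * th + 2 * th)" unfolding w_def by (simp add: algebra_simps)
    ultimately show ?thesis unfolding c_def th2[symmetric] w_def by (simp add: sin_add sin_diff)
  qed
  have W2: "w (real m) > 0" if "m \<le> n - 1" for m
  proof -
    have "real m \<le> real n - 1" using that n by linarith
    then have "(2 * real m + 1) * th < 2 * real n * th" using th0 by (intro mult_strict_right_mono) auto
    then show ?thesis unfolding w_def nth using th0 by (intro sin_gt_zero) auto
  qed
  have W3: "w (-1) = - w 0" unfolding w_def by simp
  have W4: "w (real (n - 1) - 1) = w 1"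
  proof -
    have "(2 * (real (n - 1) - 1) + 1) * th = pi - 3 * th" using n nth by (simp add: algebra_simps of_nat_diff)
    then show ?thesis unfolding w_def by simp
  qed
  have W5: "w (real (n - 1)) = w 0"
  proof -
    have "(2 * real (n - 1) + 1) * th = pi - th" using n nth by (simp add: algebra_simps of_nat_diff)
    then show ?thesis unfolding w_def by simp
  qed
  have w0: "w 0 > 0" using W2[of 0] by simp
  have main: "m \<le> n - 1 \<Longrightarrow> (\<Sum>i\<in>{1..m}. (x i - x (i-1))\<^sup>2) \<le> K * (\<Sum>i<m. (x i)\<^sup>2) + a m * (x m)\<^sup>2" for m
  proof (induction m)
    case 0
    have "a 0 = 0" unfolding a_def using W3 w0 by simp
    then show ?case by simp
  next
    case (Suc m)
    have wm: "w (real m) > 0" "w (real m + 1) > 0" using W2[of m] W2[of "Suc m"] Suc.prems by (auto simp: add.commute)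
    have IH: "(\<Sum>i\<in>{1..m}. (x i - x (i-1))\<^sup>2) \<le> K * (\<Sum>i<m. (x i)\<^sup>2) + a m * (x m)\<^sup>2"
      using Suc by simp
    have st: "(x (Suc m) - x m)\<^sup>2 \<le> (1 + w (real m + 1) / w (real m)) * (x m)\<^sup>2 + (1 + w (real m) / w (real m + 1)) * (x (Suc m))\<^sup>2"
      using wm by (rule step_ineq)
    have coef: "a m + (1 + w (real m + 1) / w (real m)) = K"
    proof -
      have "a m + (1 + w (real m + 1) / w (real m)) = 2 + (w (real m - 1) + w (real m + 1)) / w (real m)"
        unfolding a_def by (simp add: add_divide_distrib)
      also have "\<dots> = K" unfolding W1 K_def using wm by simp
      finally show ?thesis .
    qed
    have "(\<Sum>i\<in>{1..Suc m}. (x i - x (i-1))\<^sup>2) = (\<Sum>i\<in>{1..m}. (x i - x (i-1))\<^sup>2) + (x (Suc m) - x m)\<^sup>2"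
      by simp
    also have "\<dots> \<le> K * (\<Sum>i<m. (x i)\<^sup>2) + a m * (x m)\<^sup>2 + ((1 + w (real m + 1) / w (real m)) * (x m)\<^sup>2 + (1 + w (real m) / w (real m + 1)) * (x (Suc m))\<^sup>2)"
      using IH st by linarith
    also have "\<dots> = K * (\<Sum>i<m. (x i)\<^sup>2) + (a m + (1 + w (real m + 1) / w (real m))) * (x m)\<^sup>2 + (1 + w (real m) / w (real m + 1)) * (x (Suc m))\<^sup>2"
      by (simp only: algebra_simps)
    also have "\<dots> = K * (\<Sum>i<Suc m. (x i)\<^sup>2) + a (Suc m) * (x (Suc m))\<^sup>2"
      unfolding coef by (simp add: a_def algebra_simps)
    finally show ?case .
  qed
  have "a (n - 1) = K"
  proof -
    have "a (n - 1) = 1 + w 1 / w 0" unfolding a_def W4 W5 ..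
    also have "w 1 = 2 * c * w 0 + w 0" using W1[of 0] W3 by simp
    also have "1 + (2 * c * w 0 + w 0) / w 0 = 2 + 2 * c" using w0 by (simp add: field_simps)
    finally show ?thesis unfolding K_def .
  qed
  moreover have "{1..n-1} = {1..<n}" using n by auto
  moreover have "(\<Sum>i<n. (x i)\<^sup>2) = (\<Sum>i<n-1. (x i)\<^sup>2) + (x (n-1))\<^sup>2"
  proof -
    have "n = Suc (n - 1)" using n by simp
    then show ?thesis by (metis sum.lessThan_Suc)
  qed
  ultimately show ?thesis using main[of "n-1"] unfolding K_def c_def by (simp add: algebra_simps)
qed


lemma TVp_nonneg: "TVp n p x \<ge> 0"
  unfolding TVp_def by simp

lemma TVp_add:
  assumes p: "p \<ge> 1"
  shows "TVp n p (\<lambda>i. x i + y i) \<le> TVp n p x + TVp n p y"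
proof -
  have "(\<Sum>i\<in>{1..<n}. \<bar>(x i + y i) - (x (i-1) + y (i-1))\<bar> powr p)
      \<le> (\<Sum>i\<in>{1..<n}. (\<bar>x i - x (i-1)\<bar> + \<bar>y i - y (i-1)\<bar>) powr p)"
    using p by (intro sum_mono powr_mono2) auto
  then have "TVp n p (\<lambda>i. x i + y i) \<le> (\<Sum>i\<in>{1..<n}. (\<bar>x i - x (i-1)\<bar> + \<bar>y i - y (i-1)\<bar>) powr p) powr (1/p)"
    unfolding TVp_def using p by (intro powr_mono2) (auto intro!: sum_nonneg)
  also have "\<dots> \<le> TVp n p x + TVp n p y"
    unfolding TVp_def using p by (intro minkowski) auto
  finally show ?thesis .
qed

lemma TVp_scale:
  assumes p: "p \<ge> 1"
  shows "TVp n p (\<lambda>i. c * x i) = \<bar>c\<bar> * TVp n p x"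
proof -
  have "(\<Sum>i\<in>{1..<n}. \<bar>c * x i - c * x (i-1)\<bar> powr p) = \<bar>c\<bar> powr p * (\<Sum>i\<in>{1..<n}. \<bar>x i - x (i-1)\<bar> powr p)"
    by (simp add: sum_distrib_left powr_mult abs_mult flip: right_diff_distrib)
  then show ?thesis unfolding TVp_def using p
    by (simp add: powr_mult powr_powr)
qed

lemma enorm_sq: "(enorm n x)\<^sup>2 = (\<Sum>i<n. (x i)\<^sup>2)"
  unfolding enorm_def by (simp add: sum_nonneg)

lemma enorm_nonneg: "enorm n x \<ge> 0"
  unfolding enorm_def by (simp add: sum_nonneg)

lemma enorm_L2: "enorm n x = L2_set x {..<n}"
  unfolding enorm_def L2_set_def by simp

lemma dotp_ge: "dotp n g s \<ge> - (enorm n g * enorm n s)"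
proof -
  have "(\<Sum>i<n. \<bar>g i\<bar> * \<bar>s i\<bar>) \<le> enorm n g * enorm n s"
    unfolding enorm_L2 by (rule L2_set_mult_ineq)
  moreover have "- (\<Sum>i<n. \<bar>g i\<bar> * \<bar>s i\<bar>) \<le> dotp n g s"
    unfolding dotp_def by (simp add: abs_mult[symmetric] flip: sum_negf) (intro sum_mono, simp)
  ultimately show ?thesis by linarith
qed

lemma Dl2:
  fixes x :: "nat \<Rightarrow> real"
  assumes n: "n \<ge> 2"
  shows "sqrt (\<Sum>i\<in>{1..<n}. (x i - x (i-1))\<^sup>2) \<le> 2 * sin (pi * (real n - 1) / (2 * real n)) * enorm n x"
proof -
  define th where "th = pi / (2 * n)"
  have th: "0 < th" "th \<le> pi / 2" unfolding th_def using n by (auto simp: field_simps)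
  have c0: "cos th \<ge> 0" using th by (intro cos_ge_zero) auto
  have s: "sin (pi * (real n - 1) / (2 * real n)) = cos th"
  proof -
    have "pi * (real n - 1) / (2 * real n) = pi / 2 - th" unfolding th_def using n by (simp add: field_simps)
    then show ?thesis by (simp add: sin_cos_eq)
  qed
  have K: "2 + 2 * cos (pi / n) = (2 * cos th)\<^sup>2"
  proof -
    have "pi / n = 2 * th" unfolding th_def by simp
    then have "cos (pi / n) = 2 * (cos th)\<^sup>2 - 1" by (simp add: cos_double_cos)
    then show ?thesis by (simp add: power2_eq_square algebra_simps)
  qed
  have "sqrt (\<Sum>i\<in>{1..<n}. (x i - x (i-1))\<^sup>2) \<le> sqrt ((2 * cos th)\<^sup>2 * (\<Sum>i<n. (x i)\<^sup>2))"
    using diff_bound[OF n, of x] unfolding K by simp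
  also have "\<dots> = 2 * cos th * enorm n x" unfolding enorm_def using c0 by (simp add: real_sqrt_mult)
  finally show ?thesis unfolding s .
qed

definition Cp :: "nat \<Rightarrow> real \<Rightarrow> real" where
  "Cp n p = (if p < 2 then real n powr (1/p - 1/2) else 1)"

lemma Cp_nonneg: "Cp n p \<ge> 0" unfolding Cp_def by simp

lemma TVp_le:
  assumes n: "n \<ge> 2" and p: "p \<ge> 1"
  shows "TVp n p x \<le> (Cp n p * (2 * sin (pi * (real n - 1) / (2 * real n)))) * enorm n x"
proof -
  define S where "S = sqrt (\<Sum>i\<in>{1..<n}. (x i - x (i-1))\<^sup>2)"
  have S: "S \<ge> 0" unfolding S_def by (simp add: sum_nonneg)
  have "TVp n p x \<le> Cp n p * S"
  proof (cases "p < 2")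
    case True
    have "TVp n p x \<le> real (card {1..<n}) powr (1/p - 1/2) * sqrt (\<Sum>i\<in>{1..<n}. \<bar>x i - x (i-1)\<bar>\<^sup>2)"
      unfolding TVp_def using n p True by (intro lp_le_l2_small) auto
    also have "\<dots> \<le> real n powr (1/p - 1/2) * S"
    proof -
      have "real (card {1..<n}) powr (1/p - 1/2) \<le> real n powr (1/p - 1/2)"
        using True p n by (intro powr_mono2) (auto simp: divide_simps)
      then show ?thesis unfolding S_def power2_abs using S_def S by (intro mult_right_mono) auto
    qed
    finally show ?thesis unfolding Cp_def using True by simp
  next
    case False
    have "TVp n p x \<le> sqrt (\<Sum>i\<in>{1..<n}. \<bar>x i - x (i-1)\<bar>\<^sup>2)"
      unfolding TVp_def using n p False by (intro lp_le_l2) auto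
    then show ?thesis unfolding Cp_def S_def using False by simp
  qed
  also have "\<dots> \<le> Cp n p * (2 * sin (pi * (real n - 1) / (2 * real n)) * enorm n x)"
    unfolding S_def by (intro mult_left_mono Dl2 n Cp_nonneg)
  finally show ?thesis by (simp add: mult.assoc)
qed


lemma sin_nn: "n \<ge> 2 \<Longrightarrow> sin (pi * (real n - 1) / (2 * real n)) \<ge> 0"
  by (intro sin_ge_zero) (auto simp: field_simps)

lemma bound_min:
  assumes n: "n \<ge> 2" and p: "p \<ge> 1" and nu: "\<nu> > 0" and s: "s \<in> vecs n"
    and min: "\<forall>t\<in>vecs n. cp_obj n p xk g \<nu> s \<le> cp_obj n p xk g \<nu> t"
  shows "enorm n s \<le> \<nu> * (enorm n g + Cp n p * (2 * sin (pi * (real n - 1) / (2 * real n))))"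
proof (rule ccontr)
  define Lc where "Lc = Cp n p * (2 * sin (pi * (real n - 1) / (2 * real n)))"
  have Lc0: "Lc \<ge> 0" unfolding Lc_def using sin_nn[OF n] Cp_nonneg by simp
  define E where "E = enorm n s"
  define G where "G = enorm n g"
  define D where "D = dotp n g s"
  define B where "B = \<nu> * (G + Lc)"
  have G0: "G \<ge> 0" unfolding G_def by (rule enorm_nonneg)
  have B0: "B \<ge> 0" unfolding B_def using G0 Lc0 nu by simp
  assume "\<not> enorm n s \<le> \<nu> * (enorm n g + Cp n p * (2 * sin (pi * (real n - 1) / (2 * real n))))"
  then have EB: "E > B" unfolding E_def B_def G_def Lc_def by simp
  then have E0: "E > 0" using B0 by simp
  define l where "l = (E - B) / E"
  have l: "0 < l" "l \<le> 1" unfolding l_def using EB E0 B0 by (auto simp: field_simps)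
  have lE: "(2 - l) * E = E + B" unfolding l_def using E0 by (simp add: field_simps)
  define t where "t = (\<lambda>i. (1 - l) * s i)"
  have t: "t \<in> vecs n" using s unfolding t_def vecs_def by simp
  have Dt: "dotp n g t = (1 - l) * D" unfolding t_def D_def dotp_def by (simp add: sum_distrib_left algebra_simps)
  have Et: "(enorm n t)\<^sup>2 = (1 - l)\<^sup>2 * E\<^sup>2" unfolding enorm_sq t_def E_def
    by (simp add: sum_distrib_left power_mult_distrib)
  have Tt: "TVp n p (\<lambda>i. xk i + t i) \<le> TVp n p (\<lambda>i. xk i + s i) + l * (Lc * E)"
  proof -
    have "TVp n p (\<lambda>i. xk i + t i) = TVp n p (\<lambda>i. (xk i + s i) + (- l) * s i)"
      unfolding t_def by (simp add: algebra_simps)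
    also have "\<dots> \<le> TVp n p (\<lambda>i. xk i + s i) + TVp n p (\<lambda>i. (- l) * s i)"
      using p by (rule TVp_add)
    also have "TVp n p (\<lambda>i. (- l) * s i) = l * TVp n p s" using p l by (subst TVp_scale) auto
    also have "TVp n p s \<le> Lc * E" unfolding Lc_def E_def using TVp_le[OF n p] by simp
    finally show ?thesis using l by simp
  qed
  have "cp_obj n p xk g \<nu> s \<le> cp_obj n p xk g \<nu> t" using min t by blast
  then have "D + 1/2 * inverse \<nu> * E\<^sup>2 \<le> (1 - l) * D + 1/2 * inverse \<nu> * ((1 - l)\<^sup>2 * E\<^sup>2) + l * (Lc * E)"
    unfolding cp_obj_def Dt Et D_def[symmetric] E_def[symmetric] using Tt by linarith
  moreover have "1/2 * inverse \<nu> * E\<^sup>2 = E\<^sup>2 / (2 * \<nu>)" by (simp add: field_simps)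
  moreover have "1/2 * inverse \<nu> * ((1 - l)\<^sup>2 * E\<^sup>2) = (1 - l)\<^sup>2 * (E\<^sup>2 / (2 * \<nu>))" by (simp add: field_simps)
  moreover have "(2 * l - l\<^sup>2) * E\<^sup>2 / (2 * \<nu>) = E\<^sup>2 / (2 * \<nu>) - (1 - l)\<^sup>2 * (E\<^sup>2 / (2 * \<nu>))"
    using nu by (simp add: power2_eq_square field_simps)
  moreover have "(1 - l) * D = D - l * D" by (simp add: algebra_simps)
  ultimately have "l * D + (2 * l - l\<^sup>2) * E\<^sup>2 / (2 * \<nu>) \<le> l * (Lc * E)"
    by linarith
  moreover have "l * D \<ge> l * (- (G * E))" unfolding D_def G_def E_def using l dotp_ge
    by (intro mult_left_mono) auto
  ultimately have "(2 * l - l\<^sup>2) * E\<^sup>2 / (2 * \<nu>) \<le> l * ((Lc + G) * E)"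
    by (simp add: algebra_simps)
  have "(2 * l - l\<^sup>2) * E\<^sup>2 = (l * E) * ((2 - l) * E)" by (simp add: power2_eq_square algebra_simps)
  then have X: "(2 * l - l\<^sup>2) * E\<^sup>2 / (2 * \<nu>) = (l * E) * (E + B) / (2 * \<nu>)"
    unfolding lE[symmetric] by simp
  have Y: "l * ((Lc + G) * E) = (l * E) * (2 * B) / (2 * \<nu>)"
    unfolding B_def using nu by (simp add: field_simps)
  have "(l * E) * (E + B) / (2 * \<nu>) \<le> (l * E) * (2 * B) / (2 * \<nu>)"
    using \<open>(2 * l - l\<^sup>2) * E\<^sup>2 / (2 * \<nu>) \<le> l * ((Lc + G) * E)\<close> unfolding X Y .
  then have "(l * E) * (E + B) \<le> (l * E) * (2 * B)" using nu divide_right_mono[of _ _ "2 * \<nu>"]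
    by (metis divide_le_cancel less_irrefl mult_pos_pos zero_less_numeral)
  then have "E + B \<le> 2 * B" using l E0 by (simp add: mult_le_cancel_left_pos)
  then show False using EB by simp
qed


lemma coord_cont [continuous_intros]: "continuous_on S (\<lambda>x::nat \<Rightarrow> real. x i)"
  by (rule continuous_on_subset[OF continuous_on_product_coordinates]) auto

lemma cp_obj_cont:
  assumes p: "p \<ge> 1"
  shows "continuous_on S (cp_obj n p xk g \<nu>)"
proof -
  have inner: "continuous_on S (\<lambda>s::nat\<Rightarrow>real. \<bar>(xk i + s i) - (xk (i-1) + s (i-1))\<bar> powr p)" for i
    using p by (intro continuous_on_powr' continuous_intros) auto
  have tv: "continuous_on S (\<lambda>s::nat\<Rightarrow>real. TVp n p (\<lambda>i. xk i + s i))"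
    unfolding TVp_def using p
    by (intro continuous_on_powr' continuous_intros inner) (auto intro!: sum_nonneg)
  show ?thesis unfolding cp_obj_def[abs_def] dotp_def enorm_def
    by (intro continuous_intros tv)
qed

lemma enorm_ge_coord: "i < n \<Longrightarrow> enorm n x \<ge> \<bar>x i\<bar>"
proof -
  assume i: "i < n"
  have "(x i)\<^sup>2 \<le> (\<Sum>i<n. (x i)\<^sup>2)" using i by (intro member_le_sum) auto
  then show ?thesis unfolding enorm_def by (metis real_sqrt_abs real_sqrt_le_mono)
qed

lemma existence:
  assumes n: "n \<ge> 2" and p: "p \<ge> 1" and nu: "\<nu> > 0"
  shows "\<exists>s. s \<in> vecs n \<and> (\<forall>t\<in>vecs n. cp_obj n p xk g \<nu> s \<le> cp_obj n p xk g \<nu> t)"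
proof -
  define f where "f = cp_obj n p xk g \<nu>"
  define G where "G = enorm n g"
  define H where "H = TVp n p xk"
  have G0: "G \<ge> 0" unfolding G_def by (rule enorm_nonneg)
  have H0: "H \<ge> 0" unfolding H_def by (rule TVp_nonneg)
  define R where "R = 2 * \<nu> * (G + H) + 1"
  have R1: "R \<ge> 1" unfolding R_def using nu G0 H0 by simp
  define Box where "Box = Pi\<^sub>E UNIV (\<lambda>i::nat. if i < n then {-R..R} else {0::real})"
  have cBox: "compact Box"
  proof -
    have "compactin (product_topology (\<lambda>i. euclidean) UNIV) Box"
      unfolding Box_def by (subst compactin_PiE) auto
    then show ?thesis by (simp add: euclidean_product_topology)
  qed
  have zB: "(\<lambda>i. 0) \<in> Box" unfolding Box_def using R1 by auto
  have Bv: "Box \<subseteq> vecs n" unfolding Box_def vecs_def by (auto simp: PiE_iff split: if_splits)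
  have f0: "f (\<lambda>i. 0) = H" unfolding f_def cp_obj_def dotp_def enorm_def H_def by simp
  obtain s0 where s0: "s0 \<in> Box" "\<forall>y\<in>Box. f s0 \<le> f y"
    using continuous_attains_inf[OF cBox _ cp_obj_cont[OF p]] zB unfolding f_def by blast
  have "f s0 \<le> f t" if t: "t \<in> vecs n" for t
  proof (cases "t \<in> Box")
    case True then show ?thesis using s0 by blast
  next
    case False
    then obtain i where "t i \<notin> (if i < n then {-R..R} else {0})" unfolding Box_def
      by (auto simp: PiE_iff)
    moreover have "t i = 0" if "\<not> i < n" using t that unfolding vecs_def by auto
    ultimately have i: "i < n" "\<bar>t i\<bar> > R" by (auto split: if_splits)
    define E where "E = enorm n t"
    have ER: "E > R" unfolding E_def using enorm_ge_coord[OF i(1), of t] i by simp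
    have "E / (2 * \<nu>) > G + H" using ER nu unfolding R_def by (simp add: field_simps)
    then have a: "E / (2 * \<nu>) - G > H" by simp
    have "E * (E / (2 * \<nu>) - G) \<ge> 1 * (E / (2 * \<nu>) - G)"
      using ER R1 a H0 by (intro mult_right_mono) auto
    then have b: "E * (E / (2 * \<nu>) - G) > H" using a by simp
    have "f t \<ge> - (G * E) + 1/2 * inverse \<nu> * E\<^sup>2"
      unfolding f_def cp_obj_def G_def E_def using dotp_ge[of n g t] TVp_nonneg[of n p] by smt
    moreover have "1/2 * inverse \<nu> * E\<^sup>2 - G * E = E * (E / (2 * \<nu>) - G)"
      by (simp add: field_simps power2_eq_square)
    ultimately have "f t > H" using b by linarith
    then show ?thesis using s0 zB f0 by force
  qed
  then show ?thesis using s0 Bv unfolding f_def by blast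
qed

lemma uniqueness:
  assumes n: "n \<ge> 2" and p: "p \<ge> 1" and nu: "\<nu> > 0"
    and s1: "s1 \<in> vecs n" "\<forall>t\<in>vecs n. cp_obj n p xk g \<nu> s1 \<le> cp_obj n p xk g \<nu> t"
    and s2: "s2 \<in> vecs n" "\<forall>t\<in>vecs n. cp_obj n p xk g \<nu> s2 \<le> cp_obj n p xk g \<nu> t"
  shows "s1 = s2"
proof -
  define f where "f = cp_obj n p xk g \<nu>"
  define m where "m = (\<lambda>i. (s1 i + s2 i) / 2)"
  have mv: "m \<in> vecs n" using s1 s2 unfolding m_def vecs_def by auto
  define Q where "Q = (\<Sum>i<n. (s1 i - s2 i)\<^sup>2)"
  have dm: "dotp n g m = (dotp n g s1 + dotp n g s2) / 2"
  proof -
    have "dotp n g m = (\<Sum>i<n. (g i * s1 i + g i * s2 i) / 2)"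
      unfolding m_def dotp_def by (intro sum.cong) (auto simp: algebra_simps)
    also have "\<dots> = (dotp n g s1 + dotp n g s2) / 2"
      unfolding dotp_def by (simp add: sum.distrib flip: sum_divide_distrib)
    finally show ?thesis .
  qed
  have em: "(enorm n m)\<^sup>2 = ((enorm n s1)\<^sup>2 + (enorm n s2)\<^sup>2) / 2 - Q / 4"
  proof -
    have "(\<Sum>i<n. (m i)\<^sup>2) = (\<Sum>i<n. ((s1 i)\<^sup>2 + (s2 i)\<^sup>2) / 2 - (s1 i - s2 i)\<^sup>2 / 4)"
      unfolding m_def by (intro sum.cong) (auto simp: power2_eq_square field_simps)
    also have "\<dots> = ((\<Sum>i<n. (s1 i)\<^sup>2) + (\<Sum>i<n. (s2 i)\<^sup>2)) / 2 - Q / 4"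
      unfolding Q_def by (simp add: sum_subtractf sum.distrib flip: sum_divide_distrib)
    finally show ?thesis unfolding enorm_sq .
  qed
  have tm: "TVp n p (\<lambda>i. xk i + m i) \<le> (TVp n p (\<lambda>i. xk i + s1 i) + TVp n p (\<lambda>i. xk i + s2 i)) / 2"
  proof -
    have "TVp n p (\<lambda>i. xk i + m i) = TVp n p (\<lambda>i. (1/2) * (xk i + s1 i) + (1/2) * (xk i + s2 i))"
      unfolding m_def by (simp add: algebra_simps add_divide_distrib)
    also have "\<dots> \<le> TVp n p (\<lambda>i. (1/2) * (xk i + s1 i)) + TVp n p (\<lambda>i. (1/2) * (xk i + s2 i))"
      using p by (rule TVp_add)
    also have "\<dots> = (TVp n p (\<lambda>i. xk i + s1 i) + TVp n p (\<lambda>i. xk i + s2 i)) / 2"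
      using TVp_scale[OF p, where c="1/2" and x="\<lambda>i. xk i + s1 i"] TVp_scale[OF p, where c="1/2" and x="\<lambda>i. xk i + s2 i"]
      by simp
    finally show ?thesis .
  qed
  have "f m \<le> (f s1 + f s2) / 2 - inverse \<nu> * Q / 8"
  proof -
    have "1/2 * inverse \<nu> * (((enorm n s1)\<^sup>2 + (enorm n s2)\<^sup>2) / 2 - Q / 4)
      = (1/2 * inverse \<nu> * (enorm n s1)\<^sup>2 + 1/2 * inverse \<nu> * (enorm n s2)\<^sup>2) / 2 - inverse \<nu> * Q / 8"
      by (simp add: algebra_simps)
    then show ?thesis unfolding f_def cp_obj_def dm em using tm by argo
  qed
  moreover have "f s1 \<le> f m" "f s1 \<le> f s2" "f s2 \<le> f s1" using s1 s2 mv unfolding f_def by auto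
  ultimately have "inverse \<nu> * Q \<le> 0" by argo
  then have "Q \<le> 0" using nu by (simp add: mult_le_0_iff)
  moreover have "Q \<ge> 0" unfolding Q_def by (simp add: sum_nonneg)
  ultimately have "Q = 0" by simp
  then have "\<forall>i\<in>{..<n}. (s1 i - s2 i)\<^sup>2 = 0" unfolding Q_def by (subst (asm) sum_nonneg_eq_0_iff) auto
  then have "s1 i = s2 i" for i using s1(1) s2(1) unfolding vecs_def by (cases "i < n") auto
  then show ?thesis by blast
qed

theorem corollary4p3:
  fixes n :: nat and p \<nu> :: real and xk g :: "nat \<Rightarrow> real"
  assumes "n \<ge> 2" and "1 \<le> p"
    and "xk \<in> vecs n" and "g \<in> vecs n" and "\<nu> > 0"
  shows "(\<exists>!s. s \<in> vecs n \<and> (\<forall>t\<in>vecs n. cp_obj n p xk g \<nu> s \<le> cp_obj n p xk g \<nu> t))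
    \<and> (\<forall>s. s \<in> vecs n \<and> (\<forall>t\<in>vecs n. cp_obj n p xk g \<nu> s \<le> cp_obj n p xk g \<nu> t) \<longrightarrow>
      enorm n s \<le>
        (if p < 2
         then \<nu> * (enorm n g + 2 * sin (pi * (real n - 1) / (2 * real n)) * real n powr (1/p - 1/2))
         else \<nu> * (enorm n g + 2 * sin (pi * (real n - 1) / (2 * real n)))))"
proof (intro conjI allI impI)
  show "\<exists>!s. s \<in> vecs n \<and> (\<forall>t\<in>vecs n. cp_obj n p xk g \<nu> s \<le> cp_obj n p xk g \<nu> t)"
    using existence[OF assms(1,2,5)] uniqueness[OF assms(1,2,5)] by blast
next
  fix s assume s: "s \<in> vecs n \<and> (\<forall>t\<in>vecs n. cp_obj n p xk g \<nu> s \<le> cp_obj n p xk g \<nu> t)"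
  have "enorm n s \<le> \<nu> * (enorm n g + Cp n p * (2 * sin (pi * (real n - 1) / (2 * real n))))"
    using s bound_min[OF assms(1,2,5)] by blast
  then show "enorm n s \<le>
        (if p < 2
         then \<nu> * (enorm n g + 2 * sin (pi * (real n - 1) / (2 * real n)) * real n powr (1/p - 1/2))
         else \<nu> * (enorm n g + 2 * sin (pi * (real n - 1) / (2 * real n))))"
    by (cases "p < 2") (simp_all add: Cp_def algebra_simps)
qed


end
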